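(* Let $\mathcal U,\mathcal V,\mathcal X$ be real finite-dimensional Euclidean spaces, $f:\mathcal U\to(-\infty,+\infty]$ closed proper convex, $g(v)=\frac12\langle v,\Sigma_g v\rangle-\langle b,v\rangle$ with $\Sigma_g\succeq0$ self-adjoint and $b\in\mathcal V$, $\mathcal F:\mathcal X\to\mathcal U$, $\mathcal G:\mathcal X\to\mathcal V$ linear, $c\in\mathcal X$, $\sigma>0$, $\tau>0$, and $\mathcal L_\sigma(u,v;x)=f(u)+g(v)+\langle x,\mathcal F^*u+\mathcal G^*v-c\rangle+\frac\sigma2\|\mathcal F^*u+\mathcal G^*v-c\|^2$. Let $\mathcal E_g\succ0$ be self-adjoint with $\mathcal E_g\succeq\sigma^{-1}\Sigma_g+\mathcal G\mathcal G^*$, $\mathcal T_g:=\mathcal E_g-\sigma^{-1}\Sigma_g-\mathcal G\mathcal G^*$, $\mathcal T_f\succeq0$ self-adjoint on $\mathcal U$, $\widehat{\mathcal T}_f:=\mathcal T_f+\mathcal F\mathcal G^*\mathcal E_g^{-1}\mathcal G\mathcal F^*$. Let $\{(u^k,v^k,x^k)\}$ be generated by Algorithm SCB-SPALM: $(u^0,v^0,x^0)\in\mathrm{dom}f\times\mathcal V\times\mathcal X$ and $$(u^{k+1},v^{k+1})=\operatorname{argmin}_{u,v}\ \mathcal L_\sigma(u,v;x^k)+\tfrac\sigma2\|u-u^k\|^2_{\widehat{\mathcal T}_f}+\tfrac\sigma2\|v-v^k\|^2_{\mathcal T_g},\quad x^{k+1}=x^k+\tau\sigma(\mathcal F^*u^{k+1}+\mathcal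 G^*v^{k+1}-c).$$ Define $\delta_g(u,v,x):=\mathcal F\mathcal G^*\mathcal E_g^{-1}\big(b-\mathcal Gx-\Sigma_g v+\sigma\mathcal G(c-\mathcal F^*u-\mathcal G^*v)\big)$ and $\delta_g^k:=\delta_g(u^k,v^k,x^k)$. Then for every $k\ge0$, $u^{k+1},v^{k+1},x^{k+1}$ can be generated exactly by $$u^{k+1}=\operatorname{argmin}_u\ \mathcal L_\sigma(u,v^k;x^k)+\langle\delta_g^k,u\rangle+\tfrac\sigma2\|u-u^k\|^2_{\mathcal T_f},$$ $$v^{k+1}=\operatorname{argmin}_v\ \mathcal L_\sigma(u^{k+1},v;x^k)+\tfrac\sigma2\|v-v^k\|^2_{\mathcal T_g},$$ $$x^{k+1}=x^k+\tau\sigma(\mathcal F^*u^{k+1}+\mathcal G^*v^{k+1}-c).$$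
   Context: $\|w\|_{\mathcal T}^2:=\langle w,\mathcal T w\rangle$; $\succ0$/$\succeq0$ denote positive definite/semidefinite. *)

theory Defs
  imports "HOL-Analysis.Analysis" "HOL-Library.Extended_Real"
begin

definition self_adjoint :: "('a::euclidean_space \<Rightarrow> 'a) \<Rightarrow> bool" where
  "self_adjoint S \<longleftrightarrow> linear S \<and> adjoint S = S"

definition psd_op :: "('a::euclidean_space \<Rightarrow> 'a) \<Rightarrow> bool" where
  "psd_op S \<longleftrightarrow> self_adjoint S \<and> (\<forall>w. 0 \<le> w \<bullet> S w)"

definition pd_op :: "('a::euclidean_space \<Rightarrow> 'a) \<Rightarrow> bool" where
  "pd_op S \<longleftrightarrow> self_adjoint S \<and> (\<forall>w. w \<noteq> 0 \<longrightarrow> 0 < w \<bullet> S w)"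

definition wnorm2 :: "('a::euclidean_space \<Rightarrow> 'a) \<Rightarrow> 'a \<Rightarrow> real" where
  "wnorm2 T w = w \<bullet> T w"

definition proper_fun :: "('a \<Rightarrow> ereal) \<Rightarrow> bool" where
  "proper_fun f \<longleftrightarrow> (\<forall>u. f u \<noteq> -\<infinity>) \<and> (\<exists>u. f u \<noteq> \<infinity>)"

definition convex_fun :: "('a::real_vector \<Rightarrow> ereal) \<Rightarrow> bool" where
  "convex_fun f \<longleftrightarrow> convex {(u, r::real). f u \<le> ereal r}"

definition closed_fun :: "('a::topological_space \<Rightarrow> ereal) \<Rightarrow> bool" where
  "closed_fun f \<longleftrightarrow> closed {(u, r::real). f u \<le> ereal r}"

definition edom :: "('a \<Rightarrow> ereal) \<Rightarrow> 'a set" where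
  "edom f = {u. f u < \<infinity>}"

definition quad_g :: "('v::euclidean_space \<Rightarrow> 'v) \<Rightarrow> 'v \<Rightarrow> 'v \<Rightarrow> real" where
  "quad_g Sg b v = (v \<bullet> Sg v) / 2 - b \<bullet> v"

definition aug_lag ::
  "('u::euclidean_space \<Rightarrow> ereal) \<Rightarrow> ('v::euclidean_space \<Rightarrow> 'v) \<Rightarrow> 'v \<Rightarrow>
   ('x::euclidean_space \<Rightarrow> 'u) \<Rightarrow> ('x \<Rightarrow> 'v) \<Rightarrow> 'x \<Rightarrow> real \<Rightarrow> 'u \<Rightarrow> 'v \<Rightarrow> 'x \<Rightarrow> ereal" where
  "aug_lag f Sg b F G c \<sigma> u v x =
     f u + ereal (quad_g Sg b v + x \<bullet> (adjoint F u + adjoint G v - c)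
                  + \<sigma> / 2 * (norm (adjoint F u + adjoint G v - c))\<^sup>2)"

end

theory Submission
  imports Defs
begin

lemma core:
  fixes F :: "'x::euclidean_space \<Rightarrow> 'u::euclidean_space" and A :: "'u \<Rightarrow> 'x"
    and G :: "'x \<Rightarrow> 'v::euclidean_space" and B :: "'v \<Rightarrow> 'x"
    and Sg Eg Ei :: "'v \<Rightarrow> 'v" and Tf :: "'u \<Rightarrow> 'u"
    and b vk v :: 'v and x c :: 'x and uk u :: 'u and \<sigma> :: real
  assumes lF: "linear F" and lA: "linear A" and lG: "linear G" and lB: "linear B"
    and lS: "linear Sg" and lE: "linear Eg" and lEi: "linear Ei"
    and FA: "\<And>p d. F p \<bullet> d = p \<bullet> A d" and GB: "\<And>q s. G q \<bullet> s = q \<bullet> B s"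
    and Ssym: "\<And>a b. Sg a \<bullet> b = a \<bullet> Sg b" and Esym: "\<And>a b. Eg a \<bullet> b = a \<bullet> Eg b"
    and Eisym: "\<And>a b. Ei a \<bullet> b = a \<bullet> Ei b"
    and EEi: "\<And>y. Eg (Ei y) = y" and sig: "\<sigma> \<noteq> 0"
  defines "e \<equiv> b - G x - Sg vk + \<sigma> *\<^sub>R G (c - A uk - B vk)"
  defines "\<delta> \<equiv> F (B (Ei e))"
  defines "ll \<equiv> \<sigma> *\<^sub>R G (A (u - uk)) - e"
  defines "w \<equiv> v - (vk - (1/\<sigma>) *\<^sub>R Ei ll)"
  shows "quad_g Sg b v + x \<bullet> (A u + B v - c) + \<sigma> / 2 * (norm (A u + B v - c))\<^sup>2
      + \<sigma> / 2 * wnorm2 (\<lambda>w. Tf w + F (B (Ei (G (A w))))) (u - uk)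
      + \<sigma> / 2 * wnorm2 (\<lambda>w. Eg w - (1 / \<sigma>) *\<^sub>R Sg w - G (B w)) (v - vk)
    = quad_g Sg b vk + x \<bullet> (A u + B vk - c) + \<sigma> / 2 * (norm (A u + B vk - c))\<^sup>2
      + \<delta> \<bullet> u + \<sigma> / 2 * wnorm2 Tf (u - uk)
      + (- (e \<bullet> Ei e) / (2*\<sigma>) - \<delta> \<bullet> uk) + \<sigma> / 2 * (w \<bullet> Eg w)"
proof -
  define d where "d = u - uk"
  define s where "s = v - vk"
  define z where "z = G (A d)"
  define r0 where "r0 = A uk + B vk - c"
  define r' where "r' = A u + B vk - c"
  have u: "u = uk + d" and v: "v = vk + s" by (simp_all add: d_def s_def)
  have BG: "\<And>y p. B y \<bullet> p = y \<bullet> G p" by (metis GB inner_commute)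
  interpret F: linear F by fact
  interpret A: linear A by fact
  interpret G: linear G by fact
  interpret B: linear B by fact
  interpret S: linear Sg by fact
  interpret E: linear Eg by fact
  interpret Ei: linear Ei by fact
  have h1: "quad_g Sg b v = quad_g Sg b vk + Sg vk \<bullet> s + (s \<bullet> Sg s)/2 - b \<bullet> s"
    unfolding v quad_g_def by (simp add: S.add inner_add_left inner_add_right Ssym[of vk s, symmetric] inner_commute[of s "Sg vk"] inner_diff_left inner_diff_right field_simps)
  have r: "A u + B v - c = r' + B s" unfolding r'_def v by (simp add: B.add)
  have h2: "x \<bullet> (A u + B v - c) = x \<bullet> r' + G x \<bullet> s"
    unfolding r by (simp add: inner_add_right GB)
  have h3: "(norm (A u + B v - c))\<^sup>2 = (norm r')\<^sup>2 + 2 * ((G r0 + z) \<bullet> s) + (norm (B s))\<^sup>2"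
  proof -
    have "r' = r0 + A d" unfolding r'_def r0_def u by (simp add: A.add)
    hence "G r' = G r0 + z" by (simp add: z_def G.add)
    hence "r' \<bullet> B s = (G r0 + z) \<bullet> s" by (metis GB)
    thus ?thesis unfolding r by (simp add: power2_norm_eq_inner inner_add_left inner_add_right inner_commute[of "B s" r'])
  qed
  have h4: "wnorm2 (\<lambda>w. Tf w + F (B (Ei (G (A w))))) (u - uk) = wnorm2 Tf (u - uk) + Ei z \<bullet> z"
    unfolding wnorm2_def d_def[symmetric] z_def
    by (simp add: inner_add_right inner_commute[of d] FA BG)
  have h5: "wnorm2 (\<lambda>w. Eg w - (1 / \<sigma>) *\<^sub>R Sg w - G (B w)) (v - vk) = s \<bullet> Eg s - (s \<bullet> Sg s)/\<sigma> - (norm (B s))\<^sup>2"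
    unfolding wnorm2_def s_def[symmetric]
    by (simp add: inner_diff_right inner_commute[of s "G _"] GB power2_norm_eq_inner)
  have h6: "\<delta> \<bullet> u = \<delta> \<bullet> uk + Ei e \<bullet> z"
    unfolding \<delta>_def u z_def by (simp add: inner_add_right FA BG)
  have h7: "r' = A u + B vk - c" by (simp add: r'_def)
  have el: "ll = \<sigma> *\<^sub>R z - e" by (simp add: ll_def z_def d_def)
  have he: "Sg vk - b + G x + \<sigma> *\<^sub>R G r0 = - e"
    unfolding e_def r0_def by (simp add: G.diff G.add algebra_simps)
  have hlin: "Sg vk \<bullet> s - b \<bullet> s + G x \<bullet> s + \<sigma> * (G r0 \<bullet> s) = - (e \<bullet> s)"
    using arg_cong[OF he, of "\<lambda>t. t \<bullet> s"] by (simp add: inner_add_left inner_diff_left)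
  have hlin': "b \<bullet> s = e \<bullet> s + G x \<bullet> s + Sg vk \<bullet> s + \<sigma> * (G r0 \<bullet> s)" using hlin by linarith
  have hw: "w = s + (1/\<sigma>) *\<^sub>R Ei ll" unfolding w_def s_def by simp
  have hEl: "Eg (Ei ll) = ll" by (rule EEi)
  have h8: "w \<bullet> Eg w = s \<bullet> Eg s + (2/\<sigma>) * (s \<bullet> ll) + (1/\<sigma>^2) * (Ei ll \<bullet> ll)"
    unfolding hw by (simp add: E.add E.scale hEl inner_add_left inner_add_right Esym[of "Ei ll" s, symmetric] inner_commute[of ll s] power2_eq_square field_simps sig)
  have h9: "Ei ll \<bullet> ll = \<sigma>^2 * (Ei z \<bullet> z) - 2*\<sigma>*(Ei e \<bullet> z) + e \<bullet> Ei e"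
    unfolding el by (simp add: Ei.diff Ei.scale inner_diff_left inner_diff_right Eisym[of z e] Eisym[of e] inner_commute[of z "Ei e"] power2_eq_square algebra_simps)
  have h10: "s \<bullet> ll = \<sigma> * (z \<bullet> s) - e \<bullet> s"
    unfolding el by (simp add: inner_diff_right inner_commute)
  show ?thesis
    unfolding h1 h2 h3 h4 h5 h6 h8 h9 h10 h7[symmetric]
    using sig by (simp add: hlin' field_simps power2_eq_square inner_add_left)
qed

theorem proposition2p3:
  fixes f :: "'u::euclidean_space \<Rightarrow> ereal"
    and Sg :: "'v::euclidean_space \<Rightarrow> 'v" and b :: 'v
    and F :: "'x::euclidean_space \<Rightarrow> 'u" and G :: "'x \<Rightarrow> 'v" and c :: 'x
    and \<sigma> \<tau> :: real
    and Eg :: "'v \<Rightarrow> 'v" and Tf :: "'u \<Rightarrow> 'u"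
    and u :: "nat \<Rightarrow> 'u" and v :: "nat \<Rightarrow> 'v" and x :: "nat \<Rightarrow> 'x"
  assumes f_closed: "closed_fun f" and f_proper: "proper_fun f" and f_convex: "convex_fun f"
    and Sg_psd: "psd_op Sg"
    and F_lin: "linear F" and G_lin: "linear G"
    and sigma_pos: "\<sigma> > 0" and tau_pos: "\<tau> > 0"
    and Eg_pd: "pd_op Eg"
    and Eg_ge: "\<And>w. w \<bullet> Eg w \<ge> (w \<bullet> Sg w) / \<sigma> + w \<bullet> G (adjoint G w)"
    and Tf_psd: "psd_op Tf"
    and init: "u 0 \<in> edom f"
    and step_uv: "\<And>k. is_arg_min
        (\<lambda>(uu, vv). aug_lag f Sg b F G c \<sigma> uu vv (x k)
           + ereal (\<sigma> / 2 * wnorm2 (\<lambda>w. Tf w + F (adjoint G (inv Eg (G (adjoint F w))))) (uu - u k))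
           + ereal (\<sigma> / 2 * wnorm2 (\<lambda>w. Eg w - (1 / \<sigma>) *\<^sub>R Sg w - G (adjoint G w)) (vv - v k)))
        (\<lambda>_. True) (u (Suc k), v (Suc k))"
    and step_x: "\<And>k. x (Suc k) = x k + (\<tau> * \<sigma>) *\<^sub>R (adjoint F (u (Suc k)) + adjoint G (v (Suc k)) - c)"
  shows "\<forall>k. is_arg_min
        (\<lambda>uu. aug_lag f Sg b F G c \<sigma> uu (v k) (x k)
           + ereal (F (adjoint G (inv Eg (b - G (x k) - Sg (v k)
                 + \<sigma> *\<^sub>R G (c - adjoint F (u k) - adjoint G (v k))))) \<bullet> uu)
           + ereal (\<sigma> / 2 * wnorm2 Tf (uu - u k)))
        (\<lambda>_. True) (u (Suc k))
     \<and> is_arg_min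
        (\<lambda>vv. aug_lag f Sg b F G c \<sigma> (u (Suc k)) vv (x k)
           + ereal (\<sigma> / 2 * wnorm2 (\<lambda>w. Eg w - (1 / \<sigma>) *\<^sub>R Sg w - G (adjoint G w)) (vv - v k)))
        (\<lambda>_. True) (v (Suc k))
     \<and> x (Suc k) = x k + (\<tau> * \<sigma>) *\<^sub>R (adjoint F (u (Suc k)) + adjoint G (v (Suc k)) - c)"
  
proof (intro allI conjI)
  fix k
  define A where "A = adjoint F"
  define B where "B = adjoint G"
  define Ei where "Ei = inv Eg"
  have lA: "linear A" unfolding A_def by (rule adjoint_linear[OF F_lin])
  have lB: "linear B" unfolding B_def by (rule adjoint_linear[OF G_lin])
  have FA: "\<And>p d. F p \<bullet> d = p \<bullet> A d" unfolding A_def using adjoint_clauses(1)[OF F_lin] by metis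
  have GB: "\<And>p d. G p \<bullet> d = p \<bullet> B d" unfolding B_def using adjoint_clauses(1)[OF G_lin] by metis
  have lS: "linear Sg" and Sadj: "adjoint Sg = Sg" using Sg_psd by (auto simp: psd_op_def self_adjoint_def)
  have Ssym: "\<And>a b. Sg a \<bullet> b = a \<bullet> Sg b" using adjoint_works[OF lS] Sadj by metis
  have lE: "linear Eg" and Eadj: "adjoint Eg = Eg" using Eg_pd by (auto simp: pd_op_def self_adjoint_def)
  have Esym: "\<And>a b. Eg a \<bullet> b = a \<bullet> Eg b" using adjoint_works[OF lE] Eadj by metis
  have Epos: "0 \<le> w \<bullet> Eg w" for w
  proof (cases "w = 0")
    case True thus ?thesis by simp
  next
    case False thus ?thesis using Eg_pd unfolding pd_op_def by (simp add: less_imp_le)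
  qed
  have injE: "inj Eg"
  proof -
    have "\<And>w. Eg w = 0 \<Longrightarrow> w = 0" using Eg_pd unfolding pd_op_def by force
    thus ?thesis using linear_injective_0[OF lE] by blast
  qed
  have surjE: "surj Eg" using linear_injective_imp_surjective[OF lE injE] by blast
  have EEi: "\<And>y. Eg (Ei y) = y" unfolding Ei_def by (simp add: surjE surj_f_inv_f)
  have lEi: "linear Ei" unfolding Ei_def using inj_linear_imp_inv_linear[OF lE injE] .
  have Eisym: "Ei a \<bullet> b = a \<bullet> Ei b" for a b
  proof -
    have "Ei a \<bullet> b = Ei a \<bullet> Eg (Ei b)" by (simp add: EEi)
    also have "\<dots> = Eg (Ei a) \<bullet> Ei b" by (simp add: Esym)
    finally show ?thesis by (simp add: EEi)
  qed
  have sig: "\<sigma> \<noteq> 0" using sigma_pos by simp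
  note core' = core[OF F_lin lA G_lin lB lS lE lEi FA GB Ssym Esym Eisym EEi sig]
  define e where "e = b - G (x k) - Sg (v k) + \<sigma> *\<^sub>R G (c - A (u k) - B (v k))"
  define \<delta> where "\<delta> = F (B (Ei e))"
  define ll where "ll = (\<lambda>uu. \<sigma> *\<^sub>R G (A (uu - u k)) - e)"
  define vo where "vo = (\<lambda>uu. v k - (1/\<sigma>) *\<^sub>R Ei (ll uu))"
  define C where "C = - (e \<bullet> Ei e) / (2*\<sigma>) - \<delta> \<bullet> u k"
  define Q where "Q = (\<lambda>uu vv. quad_g Sg b vv + x k \<bullet> (A uu + B vv - c) + \<sigma> / 2 * (norm (A uu + B vv - c))\<^sup>2
      + \<sigma> / 2 * wnorm2 (\<lambda>w. Tf w + F (B (Ei (G (A w))))) (uu - u k)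
      + \<sigma> / 2 * wnorm2 (\<lambda>w. Eg w - (1 / \<sigma>) *\<^sub>R Sg w - G (B w)) (vv - v k))"
  define P where "P = (\<lambda>uu. quad_g Sg b (v k) + x k \<bullet> (A uu + B (v k) - c) + \<sigma> / 2 * (norm (A uu + B (v k) - c))\<^sup>2
      + \<delta> \<bullet> uu + \<sigma> / 2 * wnorm2 Tf (uu - u k))"
  have key: "\<And>uu vv. Q uu vv = P uu + C + \<sigma> / 2 * ((vv - vo uu) \<bullet> Eg (vv - vo uu))"
    unfolding Q_def P_def C_def vo_def ll_def \<delta>_def e_def
    by (rule core')
  have Qge: "\<And>uu vv. Q uu vv \<ge> P uu + C"
  proof -
    fix uu vv
    have "0 \<le> \<sigma> / 2 * ((vv - vo uu) \<bullet> Eg (vv - vo uu))"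
      using Epos sigma_pos by simp
    thus "Q uu vv \<ge> P uu + C" using key[of uu vv] by linarith
  qed
  have Qeq: "\<And>uu. Q uu (vo uu) = P uu + C"
    using key by simp
  define \<Phi> where "\<Phi> = (\<lambda>(uu, vv). aug_lag f Sg b F G c \<sigma> uu vv (x k)
           + ereal (\<sigma> / 2 * wnorm2 (\<lambda>w. Tf w + F (adjoint G (inv Eg (G (adjoint F w))))) (uu - u k))
           + ereal (\<sigma> / 2 * wnorm2 (\<lambda>w. Eg w - (1 / \<sigma>) *\<^sub>R Sg w - G (adjoint G w)) (vv - v k)))"
  have Phi: "\<And>uu vv. \<Phi> (uu, vv) = f uu + ereal (Q uu vv)"
    unfolding \<Phi>_def Q_def aug_lag_def A_def B_def Ei_def by (simp add: add.assoc)
  have amin: "is_arg_min \<Phi> (\<lambda>_. True) (u (Suc k), v (Suc k))"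
    using step_uv[of k] unfolding \<Phi>_def .
  hence nolt: "\<And>p. \<not> \<Phi> p < \<Phi> (u (Suc k), v (Suc k))" unfolding is_arg_min_def by blast
  show "is_arg_min
        (\<lambda>uu. aug_lag f Sg b F G c \<sigma> uu (v k) (x k)
           + ereal (F (adjoint G (inv Eg (b - G (x k) - Sg (v k)
                 + \<sigma> *\<^sub>R G (c - adjoint F (u k) - adjoint G (v k))))) \<bullet> uu)
           + ereal (\<sigma> / 2 * wnorm2 Tf (uu - u k)))
        (\<lambda>_. True) (u (Suc k))"
  proof -
    have Psi: "\<And>uu. aug_lag f Sg b F G c \<sigma> uu (v k) (x k)
           + ereal (F (adjoint G (inv Eg (b - G (x k) - Sg (v k)
                 + \<sigma> *\<^sub>R G (c - adjoint F (u k) - adjoint G (v k))))) \<bullet> uu)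
           + ereal (\<sigma> / 2 * wnorm2 Tf (uu - u k)) = f uu + ereal (P uu)"
      unfolding P_def aug_lag_def A_def B_def Ei_def \<delta>_def e_def by (simp add: add.assoc)
    show ?thesis unfolding is_arg_min_def Psi
    proof (clarsimp)
      fix y assume lt: "f y + ereal (P y) < f (u (Suc k)) + ereal (P (u (Suc k)))"
      have "\<Phi> (y, vo y) = f y + ereal (P y + C)" by (simp add: Phi Qeq)
      also have "\<dots> < f (u (Suc k)) + ereal (P (u (Suc k)) + C)"
        using lt by (cases "f y"; cases "f (u (Suc k))") auto
      also have "\<dots> \<le> \<Phi> (u (Suc k), v (Suc k))"
        unfolding Phi using Qge[of "u (Suc k)" "v (Suc k)"]
        by (intro add_left_mono) simp
      finally show False using nolt by blast
    qed
  qed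
  show "is_arg_min
        (\<lambda>vv. aug_lag f Sg b F G c \<sigma> (u (Suc k)) vv (x k)
           + ereal (\<sigma> / 2 * wnorm2 (\<lambda>w. Eg w - (1 / \<sigma>) *\<^sub>R Sg w - G (adjoint G w)) (vv - v k)))
        (\<lambda>_. True) (v (Suc k))"
  proof -
    define R where "R = (\<lambda>vv. quad_g Sg b vv + x k \<bullet> (A (u (Suc k)) + B vv - c) + \<sigma> / 2 * (norm (A (u (Suc k)) + B vv - c))\<^sup>2
      + \<sigma> / 2 * wnorm2 (\<lambda>w. Eg w - (1 / \<sigma>) *\<^sub>R Sg w - G (B w)) (vv - v k))"
    define t where "t = \<sigma> / 2 * wnorm2 (\<lambda>w. Tf w + F (B (Ei (G (A w))))) (u (Suc k) - u k)"
    have Gam: "\<And>vv. aug_lag f Sg b F G c \<sigma> (u (Suc k)) vv (x k)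
           + ereal (\<sigma> / 2 * wnorm2 (\<lambda>w. Eg w - (1 / \<sigma>) *\<^sub>R Sg w - G (adjoint G w)) (vv - v k))
           = f (u (Suc k)) + ereal (R vv)"
      unfolding R_def aug_lag_def A_def B_def by (simp add: add.assoc)
    have QR: "\<And>vv. Q (u (Suc k)) vv = R vv + t" unfolding Q_def R_def t_def by simp
    show ?thesis unfolding is_arg_min_def Gam
    proof (clarsimp)
      fix y assume lt: "f (u (Suc k)) + ereal (R y) < f (u (Suc k)) + ereal (R (v (Suc k)))"
      have "\<Phi> (u (Suc k), y) = f (u (Suc k)) + ereal (R y + t)" by (simp add: Phi QR)
      also have "\<dots> < f (u (Suc k)) + ereal (R (v (Suc k)) + t)"
        using lt by (cases "f (u (Suc k))") auto
      also have "\<dots> = \<Phi> (u (Suc k), v (Suc k))" by (simp add: Phi QR)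
      finally show False using nolt by blast
    qed
  qed
  show "x (Suc k) = x k + (\<tau> * \<sigma>) *\<^sub>R (adjoint F (u (Suc k)) + adjoint G (v (Suc k)) - c)"
    by (rule step_x)
qed

end
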